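(* Let $Q$ be a probability distribution on the partition space $\mathcal{P}$ and let $X_1,\dots,X_n$ be drawn i.i.d. from $Q$ (for each $n$). Suppose that $\rho:\mathcal{P}\times\mathcal{P}\to\mathbb{R}$ is continuous in both arguments with respect to $\delta_2$. Then (1) $D(\mathcal{F}_n,\mathcal{F}_Q)\to0$ almost surely, and (2) $V_n\to V_Q$ almost surely, as $n\to\infty$.
   Context: Fix $1\le\ell\le m$. $\mathcal{X} = \{\mathbf{X}\in[0,1]^{\ell\times m} : \mathbf{X}^T\mathbf{1}_\ell = \mathbf{1}_m\}$; $\Pi$ is the group of $\ell\times\ell$ permutation matrices acting by left multiplication; the partition space $\mathcal{P}=\mathcal{X}/\Pi$ is the set of orbits $X=\{\mathbf{P}\mathbf{X}:\mathbf{P}\in\Pi\}$. The metric $\delta_2$ on $\mathcal{P}$ is $\delta_2(X,Y)=\min\{\|\mathbf{X}-\mathbf{Y}\|_2:\mathbf{X}\in X,\mathbf{Y}\in Y\}$ with $\|\cdot\|_2$ the Frobenius norm. For subsets $\mathcal{U},\mathcal{V}\subseteq\mathcal{P}$, $D(\mathcal{U},\mathcal{V})=\sup_{X\in\mathcal{U}}\inf_{Y\in\mathcal{V}}\delta_2(X,Y)$. The Fréchet function of the sample is $F_n(Z)=\frac1n\sum_{i=1}^n\rho(X_i,Z)$, $V_n=\inf_Z F_n(Z)$, $\mathcal{F}_n$ the set of minimizers of $F_n$; the expected Fréchet function is $F_Q(Z)=\int_{\mathcal{P}}\rho(X,Z)\,dQ(X)$, $V_Q=\inf_Z F_Q(Z)$,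 $\mathcal{F}_Q$ the set of minimizers of $F_Q$. *)

theory Defs
  imports "HOL-Probability.Probability"
begin

text \<open>Matrices in [0,1]^(l x m) with rows indexed by 'l and columns by 'm;
  entry (i,j) is X $ i $ j.  The Frobenius norm is the norm on real^'m^'l.\<close>

definition Xspace :: "(real^'m^'l) set" where
  "Xspace = {X. (\<forall>i j. 0 \<le> X $ i $ j \<and> X $ i $ j \<le> 1) \<and>
                 (\<forall>j. (\<Sum>i\<in>UNIV. X $ i $ j) = 1)}"

definition perm_matrices :: "(real^'l^'l) set" where
  "perm_matrices = {P. \<exists>\<sigma>. \<sigma> permutes (UNIV :: 'l set) \<and>
                        P = (\<chi> i j. if \<sigma> i = j then 1 else 0)}"

definition orbit :: "real^'m^'l \<Rightarrow> (real^'m^'l) set" where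
  "orbit X = {P ** X | P. P \<in> perm_matrices}"

definition Pspace :: "(real^'m^'l) set set" where
  "Pspace = orbit ` Xspace"

definition delta2 :: "(real^'m^'l) set \<Rightarrow> (real^'m^'l) set \<Rightarrow> real" where
  "delta2 A B = Inf {norm (X - Y) | X Y. X \<in> A \<and> Y \<in> B}"

definition Dhaus :: "(real^'m^'l) set set \<Rightarrow> (real^'m^'l) set set \<Rightarrow> real" where
  "Dhaus U V = (SUP X\<in>U. INF Y\<in>V. delta2 X Y)"

definition Popen :: "(real^'m^'l) set set \<Rightarrow> bool" where
  "Popen U \<longleftrightarrow> U \<subseteq> Pspace \<and>
     (\<forall>x\<in>U. \<exists>e>0. \<forall>y\<in>Pspace. delta2 x y < e \<longrightarrow> y \<in> U)"

definition Pborel :: "(real^'m^'l) set measure" where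
  "Pborel = sigma Pspace {U. Popen U}"

definition rho_continuous :: "((real^'m^'l) set \<Rightarrow> (real^'m^'l) set \<Rightarrow> real) \<Rightarrow> bool" where
  "rho_continuous \<rho> \<longleftrightarrow>
     (\<forall>A\<in>Pspace. \<forall>B\<in>Pspace. \<forall>e>0. \<exists>d>0. \<forall>A'\<in>Pspace. \<forall>B'\<in>Pspace.
        delta2 A A' < d \<and> delta2 B B' < d \<longrightarrow> \<bar>\<rho> A' B' - \<rho> A B\<bar> < e)"

text \<open>Sample Frechet function F_n(Z) = (1/n) sum_{i=1}^n rho(X_i,Z) (sample indexed from 0).\<close>
definition Fn :: "((real^'m^'l) set \<Rightarrow> (real^'m^'l) set \<Rightarrow> real) \<Rightarrow> (nat \<Rightarrow> (real^'m^'l) set)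
                   \<Rightarrow> nat \<Rightarrow> (real^'m^'l) set \<Rightarrow> real" where
  "Fn \<rho> xs n Z = (1 / real n) * (\<Sum>i<n. \<rho> (xs i) Z)"

definition Vn where
  "Vn \<rho> xs n = (INF Z\<in>Pspace. Fn \<rho> xs n Z)"

definition Fn_set where
  "Fn_set \<rho> xs n = {Z\<in>Pspace. Fn \<rho> xs n Z = Vn \<rho> xs n}"

definition FQ :: "((real^'m^'l) set \<Rightarrow> (real^'m^'l) set \<Rightarrow> real) \<Rightarrow> (real^'m^'l) set measure
                   \<Rightarrow> (real^'m^'l) set \<Rightarrow> real" where
  "FQ \<rho> Q Z = (\<integral>X. \<rho> X Z \<partial>Q)"

definition VQ where
  "VQ \<rho> Q = (INF Z\<in>Pspace. FQ \<rho> Q Z)"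

definition FQ_set where
  "FQ_set \<rho> Q = {Z\<in>Pspace. FQ \<rho> Q Z = VQ \<rho> Q}"

end

theory Submission
  imports Defs
begin

lemma Xspace_closed: "closed (Xspace :: (real^'m^'l) set)"
proof -
  have "Xspace = (\<Inter>i. \<Inter>j. {X::real^'m^'l. 0 \<le> X $ i $ j} \<inter> {X. X $ i $ j \<le> 1}) \<inter> (\<Inter>j. {X. (\<Sum>i\<in>UNIV. X $ i $ j) = 1})"
    unfolding Xspace_def by auto
  moreover have "closed \<dots>"
    by (intro closed_Int closed_INT ballI closed_Collect_le closed_Collect_eq continuous_intros)
  ultimately show ?thesis by simp
qed

lemma Xspace_bounded: "bounded (Xspace :: (real^'m^'l) set)"
proof -
  have "norm X \<le> real CARD('l) * real CARD('m)" if "X \<in> Xspace" for X :: "real^'m^'l"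
  proof -
    have "norm X \<le> (\<Sum>i\<in>UNIV. norm (X $ i))" by (simp add: norm_vec_def L2_set_le_sum)
    also have "\<dots> \<le> (\<Sum>i\<in>(UNIV::'l set). real CARD('m))"
    proof (rule sum_mono)
      fix i
      have "norm (X $ i) \<le> (\<Sum>j\<in>UNIV. \<bar>X $ i $ j\<bar>)" by (rule norm_le_l1_cart)
      also have "\<dots> \<le> (\<Sum>j\<in>(UNIV::'m set). 1)"
        using that by (intro sum_mono) (auto simp: Xspace_def)
      finally show "norm (X $ i) \<le> real CARD('m)" by simp
    qed
    finally show ?thesis by simp
  qed
  then show ?thesis unfolding bounded_iff by blast
qed

lemma Xspace_compact: "compact (Xspace :: (real^'m^'l) set)"
  using Xspace_closed Xspace_bounded compact_eq_bounded_closed by blast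

lemma Xspace_ne: "(Xspace :: (real^'m^'l) set) \<noteq> {}"
proof -
  obtain a :: 'l where True by simp
  define X :: "real^'m^'l" where "X = (\<chi> i j. if i = a then 1 else 0)"
  have "X \<in> Xspace" unfolding Xspace_def X_def
    by (auto simp: if_distrib sum.delta cong: if_cong)
  then show ?thesis by blast
qed

lemma mat1_perm: "(mat 1 :: real^'l^'l) \<in> perm_matrices"
  unfolding perm_matrices_def mat_def by (auto intro!: exI[of _ id] permutes_id)

lemma in_orbit: "X \<in> orbit X"
  unfolding orbit_def using mat1_perm by (metis (mono_tags, lifting) matrix_mul_lid mem_Collect_eq)

lemma delta2_le: "X \<in> A \<Longrightarrow> Y \<in> B \<Longrightarrow> delta2 A B \<le> norm (X - Y)"
  unfolding delta2_def by (rule cInf_lower) (auto intro: bdd_belowI[of _ 0])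

lemma delta2_nonneg: "A \<noteq> {} \<Longrightarrow> B \<noteq> {} \<Longrightarrow> 0 \<le> delta2 A B"
  unfolding delta2_def by (rule cInf_greatest) auto

lemma delta2_orbit: "delta2 (orbit X) (orbit Y) \<le> norm (X - Y)"
  by (intro delta2_le in_orbit)

lemma Pspace_ne: "A \<in> Pspace \<Longrightarrow> A \<noteq> {}"
  unfolding Pspace_def using in_orbit by blast

lemma orbit_Pspace: "Y \<in> Xspace \<Longrightarrow> orbit Y \<in> Pspace"
  unfolding Pspace_def by blast

lemma rho_cont_Xspace:
  fixes \<rho> :: "(real^'m^'l) set \<Rightarrow> (real^'m^'l) set \<Rightarrow> real"
  assumes "rho_continuous \<rho>"
  shows "continuous_on (Xspace \<times> Xspace) (\<lambda>p. \<rho> (orbit (fst p)) (orbit (snd p)))"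
  unfolding continuous_on_iff
proof (intro ballI allI impI)
  fix p :: "(real^'m^'l) \<times> (real^'m^'l)" and e :: real
  assume p: "p \<in> Xspace \<times> Xspace" and e: "0 < e"
  obtain d where d: "d > 0" and hd: "\<And>A' B'. A' \<in> Pspace \<Longrightarrow> B' \<in> Pspace \<Longrightarrow>
      delta2 (orbit (fst p)) A' < d \<Longrightarrow> delta2 (orbit (snd p)) B' < d \<Longrightarrow>
      \<bar>\<rho> A' B' - \<rho> (orbit (fst p)) (orbit (snd p))\<bar> < e"
  proof -
    have "orbit (fst p) \<in> Pspace" "orbit (snd p) \<in> Pspace" using p orbit_Pspace by auto
    then have "\<exists>d>0. \<forall>A'\<in>Pspace. \<forall>B'\<in>Pspace. delta2 (orbit (fst p)) A' < d \<and> delta2 (orbit (snd p)) B' < d \<longrightarrow>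
        \<bar>\<rho> A' B' - \<rho> (orbit (fst p)) (orbit (snd p))\<bar> < e"
      using assms e unfolding rho_continuous_def by blast
    then show ?thesis using that by blast
  qed
  show "\<exists>d>0. \<forall>p'\<in>Xspace \<times> Xspace. dist p' p < d \<longrightarrow>
     dist (\<rho> (orbit (fst p')) (orbit (snd p'))) (\<rho> (orbit (fst p)) (orbit (snd p))) < e"
  proof (intro exI[of _ d] conjI ballI impI d)
    fix p' assume p': "p' \<in> Xspace \<times> Xspace" and dp: "dist p' p < d"
    have "delta2 (orbit (fst p)) (orbit (fst p')) \<le> norm (fst p - fst p')" by (rule delta2_orbit)
    also have "\<dots> = dist (fst p') (fst p)" by (simp add: dist_norm norm_minus_commute)
    also have "\<dots> \<le> dist p' p" by (rule dist_fst_le)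
    finally have 1: "delta2 (orbit (fst p)) (orbit (fst p')) < d" using dp by simp
    have "delta2 (orbit (snd p)) (orbit (snd p')) \<le> norm (snd p - snd p')" by (rule delta2_orbit)
    also have "\<dots> = dist (snd p') (snd p)" by (simp add: dist_norm norm_minus_commute)
    also have "\<dots> \<le> dist p' p" by (rule dist_snd_le)
    finally have 2: "delta2 (orbit (snd p)) (orbit (snd p')) < d" using dp by simp
    show "dist (\<rho> (orbit (fst p')) (orbit (snd p'))) (\<rho> (orbit (fst p)) (orbit (snd p))) < e"
    proof -
      have "orbit (fst p') \<in> Pspace" "orbit (snd p') \<in> Pspace" using p' orbit_Pspace by auto
      from hd[OF this 1 2] show ?thesis by (simp add: dist_real_def)
    qed
  qed
qed

lemma Pspace_E: "A \<in> Pspace \<Longrightarrow> (\<And>X. X \<in> Xspace \<Longrightarrow> A = orbit X \<Longrightarrow> P) \<Longrightarrow> P"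
  unfolding Pspace_def by blast

lemma rho_bound:
  fixes \<rho> :: "(real^'m^'l) set \<Rightarrow> (real^'m^'l) set \<Rightarrow> real"
  assumes "rho_continuous \<rho>"
  obtains B where "\<And>A Z. A \<in> Pspace \<Longrightarrow> Z \<in> Pspace \<Longrightarrow> \<bar>\<rho> A Z\<bar> \<le> B"
proof -
  have cpt: "compact ((\<lambda>p. \<rho> (orbit (fst p)) (orbit (snd p))) ` (Xspace \<times> Xspace))"
    by (intro compact_continuous_image rho_cont_Xspace assms compact_Times Xspace_compact)
  then obtain B where B: "\<And>x. x \<in> (\<lambda>p. \<rho> (orbit (fst p)) (orbit (snd p))) ` (Xspace \<times> Xspace) \<Longrightarrow> norm x \<le> B"
    using compact_imp_bounded[OF cpt] unfolding bounded_iff by blast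
  show ?thesis
  proof (rule that)
    fix A Z :: "(real^'m^'l) set" assume "A \<in> Pspace" "Z \<in> Pspace"
    then obtain X Y where "X \<in> Xspace" "Y \<in> Xspace" "A = orbit X" "Z = orbit Y"
      by (elim Pspace_E) blast
    then show "\<bar>\<rho> A Z\<bar> \<le> B" using B[of "\<rho> A Z"] by force
  qed
qed

lemma rho_unif:
  fixes \<rho> :: "(real^'m^'l) set \<Rightarrow> (real^'m^'l) set \<Rightarrow> real"
  assumes "rho_continuous \<rho>" "e > 0"
  obtains d where "d > 0" "\<And>A Y Y'. A \<in> Pspace \<Longrightarrow> Y \<in> Xspace \<Longrightarrow> Y' \<in> Xspace \<Longrightarrow>
      norm (Y - Y') < d \<Longrightarrow> \<bar>\<rho> A (orbit Y) - \<rho> A (orbit Y')\<bar> < e"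
proof -
  have "uniformly_continuous_on (Xspace \<times> Xspace) (\<lambda>p. \<rho> (orbit (fst p)) (orbit (snd p)))"
    by (intro compact_uniformly_continuous rho_cont_Xspace assms compact_Times Xspace_compact)
  then obtain d where d: "d > 0" and hd: "\<And>x x'. x \<in> Xspace \<times> Xspace \<Longrightarrow> x' \<in> Xspace \<times> Xspace \<Longrightarrow>
     dist x' x < d \<Longrightarrow> dist (\<rho> (orbit (fst x')) (orbit (snd x'))) (\<rho> (orbit (fst x)) (orbit (snd x))) < e"
    unfolding uniformly_continuous_on_def using assms(2) by blast
  show ?thesis
  proof (rule that[OF d])
    fix A :: "(real^'m^'l) set" and Y Y' :: "real^'m^'l" assume A: "A \<in> Pspace" and Y: "Y \<in> Xspace" and Y': "Y' \<in> Xspace" and n: "norm (Y - Y') < d"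
    obtain X where X: "X \<in> Xspace" "A = orbit X" using A by (elim Pspace_E) blast
    have dn: "dist (X, Y) (X, Y') < d" using n by (simp add: dist_Pair_Pair dist_norm)
    have "dist (\<rho> (orbit X) (orbit Y)) (\<rho> (orbit X) (orbit Y')) < e"
      using hd[of "(X, Y')" "(X, Y)"] X Y Y' dn by simp
    then show "\<bar>\<rho> A (orbit Y) - \<rho> A (orbit Y')\<bar> < e" using X by (simp add: dist_real_def)
  qed
qed

lemma Popen_sub: "{U. Popen U} \<subseteq> Pow Pspace"
  unfolding Popen_def by auto

lemma space_Pborel: "space Pborel = Pspace"
  unfolding Pborel_def by (simp add: space_measure_of_conv)

lemma sets_Pborel: "sets Pborel = sigma_sets Pspace {U. Popen U}"
  unfolding Pborel_def by (rule sets_measure_of[OF Popen_sub])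

lemma delta2_self_lt: "Z \<in> Pspace \<Longrightarrow> d > 0 \<Longrightarrow> delta2 Z Z < d"
proof (elim Pspace_E)
  fix X assume "Z = orbit X" "d > 0"
  then show "delta2 Z Z < d" using delta2_orbit[of X X] by simp
qed

lemma rho_meas:
  fixes \<rho> :: "(real^'m^'l) set \<Rightarrow> (real^'m^'l) set \<Rightarrow> real"
  assumes rc: "rho_continuous \<rho>" and Z: "Z \<in> Pspace"
  shows "(\<lambda>A. \<rho> A Z) \<in> borel_measurable Pborel"
proof (rule borel_measurableI)
  fix S :: "real set" assume S: "open S"
  have "Popen ((\<lambda>A. \<rho> A Z) -` S \<inter> Pspace)"
    unfolding Popen_def
  proof (intro conjI ballI)
    fix A assume A: "A \<in> (\<lambda>A. \<rho> A Z) -` S \<inter> Pspace"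
    obtain e where e: "e > 0" "\<And>y. dist y (\<rho> A Z) < e \<Longrightarrow> y \<in> S"
      using S A unfolding open_dist by blast
    obtain d where d: "d > 0" and hd: "\<forall>A'\<in>Pspace. \<forall>B'\<in>Pspace. delta2 A A' < d \<and> delta2 Z B' < d \<longrightarrow>
        \<bar>\<rho> A' B' - \<rho> A Z\<bar> < e"
      using rc A Z e(1) unfolding rho_continuous_def by blast
    show "\<exists>e>0. \<forall>y\<in>Pspace. delta2 A y < e \<longrightarrow> y \<in> (\<lambda>A. \<rho> A Z) -` S \<inter> Pspace"
    proof (intro exI[of _ d] conjI d ballI impI)
      fix y assume y: "y \<in> Pspace" "delta2 A y < d"
      have "\<bar>\<rho> y Z - \<rho> A Z\<bar> < e" using hd y Z delta2_self_lt[OF Z d] by blast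
      then show "y \<in> (\<lambda>A. \<rho> A Z) -` S \<inter> Pspace" using e(2) y by (simp add: dist_real_def)
    qed
  qed auto
  then show "(\<lambda>A. \<rho> A Z) -` S \<inter> space Pborel \<in> sets Pborel"
    by (simp add: space_Pborel sets_Pborel sigma_sets.Basic)
qed

lemma rho_integrable:
  fixes \<rho> :: "(real^'m^'l) set \<Rightarrow> (real^'m^'l) set \<Rightarrow> real"
  assumes rc: "rho_continuous \<rho>" and Z: "Z \<in> Pspace"
    and Q: "prob_space Q" "sets Q = sets Pborel" "space Q = Pspace"
  shows "integrable Q (\<lambda>A. \<rho> A Z)"
proof -
  obtain B where B: "\<And>A Z. A \<in> Pspace \<Longrightarrow> Z \<in> Pspace \<Longrightarrow> \<bar>\<rho> A Z\<bar> \<le> B"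
    using rho_bound[OF rc] by blast
  have m: "(\<lambda>A. \<rho> A Z) \<in> borel_measurable Q"
    by (subst measurable_cong_sets[OF Q(2) refl]) (rule rho_meas[OF rc Z])
  show ?thesis
  proof -
    interpret prob_space Q by (rule Q(1))
    show ?thesis
      by (rule integrable_const_bound[where B=B]) (use Q m B Z in \<open>auto intro!: AE_I2\<close>)
  qed
qed

lemma FQ_diff:
  fixes \<rho> :: "(real^'m^'l) set \<Rightarrow> (real^'m^'l) set \<Rightarrow> real"
  assumes rc: "rho_continuous \<rho>" and Z: "Z \<in> Pspace" and Z': "Z' \<in> Pspace"
    and Q: "prob_space Q" "sets Q = sets Pborel" "space Q = Pspace"
    and h: "\<And>A. A \<in> Pspace \<Longrightarrow> \<bar>\<rho> A Z - \<rho> A Z'\<bar> \<le> e"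
  shows "\<bar>FQ \<rho> Q Z - FQ \<rho> Q Z'\<bar> \<le> e"
proof -
  have i1: "integrable Q (\<lambda>A. \<rho> A Z)" and i2: "integrable Q (\<lambda>A. \<rho> A Z')"
    using rho_integrable[OF rc _ Q] Z Z' by auto
  have ic: "integrable Q (\<lambda>A. c)" for c :: real
  proof -
    interpret prob_space Q by (rule Q(1))
    show ?thesis by simp
  qed
  have m1: "measure Q (space Q) = 1" using Q(1) by (rule prob_space.prob_space)
  have eq: "FQ \<rho> Q Z - FQ \<rho> Q Z' = (\<integral>A. \<rho> A Z - \<rho> A Z' \<partial>Q)"
    unfolding FQ_def using i1 i2 by simp
  have "(\<integral>A. \<rho> A Z - \<rho> A Z' \<partial>Q) \<le> (\<integral>A. e \<partial>Q)"
    by (rule integral_mono) (use i1 i2 ic h Q(3) in \<open>auto simp: abs_le_iff\<close>)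
  moreover have h': "- e \<le> \<rho> A Z - \<rho> A Z'" if "A \<in> space Q" for A
    using h[of A] that Q(3) by (simp add: abs_le_iff)
  moreover have "(\<integral>A. - e \<partial>Q) \<le> (\<integral>A. \<rho> A Z - \<rho> A Z' \<partial>Q)"
    by (rule integral_mono) (use i1 i2 ic h' in auto)
  ultimately show ?thesis using m1 eq by (simp add: lebesgue_integral_const abs_le_iff)
qed

definition ucont :: "((real^'m^'l) set \<Rightarrow> real) \<Rightarrow> bool" where
  "ucont H \<longleftrightarrow> (\<forall>e>0. \<exists>d>0. \<forall>Y\<in>Xspace. \<forall>Y'\<in>Xspace. norm (Y - Y') < d \<longrightarrow> \<bar>H (orbit Y) - H (orbit Y')\<bar> \<le> e)"

lemma ucont_cont:
  fixes H :: "(real^'m^'l) set \<Rightarrow> real"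
  shows "ucont H \<Longrightarrow> continuous_on Xspace (\<lambda>Y. H (orbit Y))"
  unfolding continuous_on_iff ucont_def
proof (intro ballI allI impI)
  fix x :: "real^'m^'l" and e :: real assume u: "\<forall>e>0. \<exists>d>0. \<forall>Y\<in>Xspace. \<forall>Y'\<in>Xspace. norm (Y - Y') < d \<longrightarrow> \<bar>H (orbit Y) - H (orbit Y')\<bar> \<le> e"
    and x: "x \<in> Xspace" and e: "(0::real) < e"
  obtain d where d: "d > 0" "\<forall>Y\<in>Xspace. \<forall>Y'\<in>Xspace. norm (Y - Y') < d \<longrightarrow> \<bar>H (orbit Y) - H (orbit Y')\<bar> \<le> e/2"
    using u e by (meson half_gt_zero)
  show "\<exists>d>0. \<forall>x'::real^'m^'l\<in>Xspace. dist x' x < d \<longrightarrow> dist (H (orbit x')) (H (orbit x)) < e"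
    using d x e by (intro exI[of _ d]) (force simp: dist_norm dist_real_def)
qed

lemma ucont_min:
  fixes H :: "(real^'m^'l) set \<Rightarrow> real"
  assumes "ucont H"
  obtains Z0 where "Z0 \<in> Pspace" "(INF Z\<in>Pspace. H Z) = H Z0" "\<And>Z. Z \<in> Pspace \<Longrightarrow> H Z0 \<le> H Z"
proof -
  obtain Y0 where Y0: "Y0 \<in> Xspace" "\<And>Y. Y \<in> Xspace \<Longrightarrow> H (orbit Y0) \<le> H (orbit Y)"
    using continuous_attains_inf[OF Xspace_compact Xspace_ne ucont_cont[OF assms]] by blast
  have le: "H (orbit Y0) \<le> H Z" if "Z \<in> Pspace" for Z
    using that Y0 by (elim Pspace_E) auto
  have "(INF Z\<in>Pspace. H Z) = H (orbit Y0)"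
    by (rule cInf_eq_minimum) (use Y0 le orbit_Pspace in auto)
  then show ?thesis using that[of "orbit Y0"] Y0 le orbit_Pspace by blast
qed

lemma aux_alg: "(n::real) > 0 \<Longrightarrow> K > 0 \<Longrightarrow> -2*(n*e)\<^sup>2/(n*K) = -(n*(2*e\<^sup>2/K))"
  by (simp add: power2_eq_square field_simps)

lemma hoeffding_step:
  fixes Xs :: "nat \<Rightarrow> 'w \<Rightarrow> 'a" and f :: "'a \<Rightarrow> real"
  assumes M: "prob_space M" and Xm: "\<And>i. Xs i \<in> measurable M N"
    and Xd: "\<And>i. distr M N (Xs i) = Q"
    and ind: "prob_space.indep_vars M (\<lambda>_. N) Xs UNIV"
    and fm: "f \<in> borel_measurable N" and fb: "\<And>x. x \<in> space N \<Longrightarrow> \<bar>f x\<bar> \<le> B"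
    and n: "n \<ge> 1" and e: "e \<ge> 0"
  shows "measure M {w\<in>space M. real n * e \<le> \<bar>(\<Sum>i<n. f (Xs i w)) - real n * integral\<^sup>L Q f\<bar>}
          \<le> 2 * exp (- (real n * (2 * e\<^sup>2 / (2 * \<bar>B\<bar> + 2)\<^sup>2)))"
proof -
  interpret prob_space M by (rule M)
  define Y where "Y = (\<lambda>i w. f (Xs i w))"
  define a where "a = - \<bar>B\<bar> - 1"
  define b where "b = \<bar>B\<bar> + 1"
  have Ym: "Y i \<in> borel_measurable M" for i
    unfolding Y_def using Xm fm by measurable
  have Yd: "distr M borel (Y i) = distr Q borel f" for i
  proof -
    have "distr M borel (Y i) = distr (distr M N (Xs i)) borel f"
      by (subst distr_distr[OF fm Xm]) (simp add: Y_def comp_def)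
    then show ?thesis by (simp add: Xd)
  qed
  have Yind: "indep_vars (\<lambda>_. borel) Y {..<n}"
  proof -
    have "indep_vars (\<lambda>_. borel) (\<lambda>i x. f (Xs i x)) UNIV"
      by (rule indep_vars_compose2[OF ind]) (use fm in auto)
    then show ?thesis unfolding Y_def by (rule indep_vars_subset) auto
  qed
  have Yab: "AE w in M. Y 0 w \<in> {a..b}"
  proof (rule AE_I2)
    fix w assume "w \<in> space M"
    then have "Xs 0 w \<in> space N" by (rule measurable_space[OF Xm])
    then show "Y 0 w \<in> {a..b}" using fb[of "Xs 0 w"] by (auto simp: Y_def a_def b_def)
  qed
  have EY: "expectation (\<lambda>w. f (Xs 0 w)) = integral\<^sup>L Q f"
  proof -
    have "integral\<^sup>L (distr M N (Xs 0)) f = expectation (\<lambda>w. f (Xs 0 w))"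
      by (rule integral_distr[OF Xm fm])
    then show ?thesis by (simp add: Xd Y_def)
  qed
  interpret H: Hoeffding_ineq_iid M "{..<n}" Y "Y 0" a b "expectation (Y 0)"
    by unfold_locales (simp_all only: M finite_lessThan Yind Yd Ym Yab)
  have ab: "a < b" unfolding a_def b_def by simp
  have "prob {x\<in>space M. \<bar>(\<Sum>i\<in>{..<n}. Y i x) - real (card {..<n}) * expectation (Y 0)\<bar> \<ge> real n * e} \<le>
        2 * exp (-2 * (real n * e)\<^sup>2 / (real (card {..<n}) * (b - a)\<^sup>2))"
    by (rule H.Hoeffding_ineq_abs_ge) (use e ab n in \<open>auto simp: lessThan_empty_iff\<close>)
  moreover have "(b - a) = 2 * \<bar>B\<bar> + 2" unfolding a_def b_def by simp
  moreover have "-2 * (real n * e)\<^sup>2 / (real n * (2 * \<bar>B\<bar> + 2)\<^sup>2) = - (real n * (2 * e\<^sup>2 / (2 * \<bar>B\<bar> + 2)\<^sup>2))"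
  proof -
    have nz: "real n > 0" using n by simp
    have Kz: "(2 * \<bar>B\<bar> + 2)\<^sup>2 > 0" by (simp add: add_pos_nonneg)
    show ?thesis using aux_alg[OF nz Kz] .
  qed
  ultimately show ?thesis by (simp add: EY Y_def)
qed

lemma slln_bounded:
  fixes Xs :: "nat \<Rightarrow> 'w \<Rightarrow> 'a" and f :: "'a \<Rightarrow> real"
  assumes M: "prob_space M" and Xm: "\<And>i. Xs i \<in> measurable M N"
    and Xd: "\<And>i. distr M N (Xs i) = Q"
    and ind: "prob_space.indep_vars M (\<lambda>_. N) Xs UNIV"
    and fm: "f \<in> borel_measurable N" and fb: "\<And>x. x \<in> space N \<Longrightarrow> \<bar>f x\<bar> \<le> B"
  shows "AE w in M. (\<lambda>n. (\<Sum>i<n. f (Xs i w)) / real n) \<longlonglongrightarrow> integral\<^sup>L Q f"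
proof -
  interpret prob_space M by (rule M)
  define \<mu> where "\<mu> = integral\<^sup>L Q f"
  define A where "A k n = {w\<in>space M. real n * (1 / real (Suc k)) \<le> \<bar>(\<Sum>i<n. f (Xs i w)) - real n * \<mu>\<bar>}" for k n
  have ev: "AE w in M. eventually (\<lambda>n. w \<in> space M - A k n) sequentially" for k
  proof (rule borel_cantelli_AE1)
    fix n
    have [measurable]: "Xs i \<in> M \<rightarrow>\<^sub>M N" for i by (rule Xm)
    have [measurable]: "f \<in> borel_measurable N" by (rule fm)
    show "A k n \<in> sets M" unfolding A_def by measurable
    show "emeasure M (A k n) < \<infinity>" by (simp add: less_top[symmetric])
  next
    define c where "c = 2 * (1 / real (Suc k))\<^sup>2 / (2 * \<bar>B\<bar> + 2)\<^sup>2"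
    have c: "c > 0" unfolding c_def by (intro divide_pos_pos) (auto simp: add_pos_nonneg)
    have q: "exp (- c) < 1" using c by simp
    have sg: "summable (\<lambda>n. 2 * exp (- c) ^ n)"
      by (intro summable_mult summable_geometric) (use q in auto)
    show "summable (\<lambda>n. measure M (A k n))"
    proof (rule summable_comparison_test'[OF sg])
      fix n :: nat assume n: "n \<ge> 1"
      have "measure M (A k n) \<le> 2 * exp (- (real n * c))"
        unfolding A_def c_def \<mu>_def
        by (rule hoeffding_step[OF M Xm Xd ind fm fb n]) auto
      also have "exp (- (real n * c)) = exp (- c) ^ n"
        by (simp add: exp_of_nat_mult[symmetric])
      finally show "norm (measure M (A k n)) \<le> 2 * exp (- c) ^ n" by simp
    qed
  qed
  then have "AE w in M. \<forall>k. eventually (\<lambda>n. w \<in> space M - A k n) sequentially"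
    by (simp add: AE_all_countable)
  then show ?thesis
  proof (rule eventually_mono)
    fix w assume h: "\<forall>k. eventually (\<lambda>n. w \<in> space M - A k n) sequentially"
    show "(\<lambda>n. (\<Sum>i<n. f (Xs i w)) / real n) \<longlonglongrightarrow> integral\<^sup>L Q f"
      unfolding tendsto_iff
    proof (intro allI impI)
      fix r :: real assume r: "r > 0"
      obtain k where k: "inverse (real (Suc k)) < r" using reals_Archimedean[OF r] by blast
      have "eventually (\<lambda>n. w \<in> space M - A k n \<and> n \<ge> 1) sequentially"
        using h eventually_ge_at_top[of 1] by (simp add: eventually_conj_iff)
      then show "eventually (\<lambda>n. dist ((\<Sum>i<n. f (Xs i w)) / real n) (integral\<^sup>L Q f) < r) sequentially"
      proof (rule eventually_mono)
        fix n assume "w \<in> space M - A k n \<and> n \<ge> 1"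
        then have lt: "\<bar>(\<Sum>i<n. f (Xs i w)) - real n * \<mu>\<bar> < real n * (1 / real (Suc k))" and n: "real n > 0"
          unfolding A_def by auto
        define S where "S = (\<Sum>i<n. f (Xs i w))"
        have "S / real n - \<mu> = (S - real n * \<mu>) / real n"
          using n by (simp add: field_simps)
        moreover have "\<bar>(S - real n * \<mu>) / real n\<bar> = \<bar>S - real n * \<mu>\<bar> / real n"
          using n by simp
        moreover have "\<bar>S - real n * \<mu>\<bar> / real n < 1 / real (Suc k)"
          using lt n unfolding S_def by (simp add: pos_divide_less_eq)
        ultimately have "\<bar>(\<Sum>i<n. f (Xs i w)) / real n - \<mu>\<bar> < 1 / real (Suc k)"
          unfolding S_def by simp
        then show "dist ((\<Sum>i<n. f (Xs i w)) / real n) (integral\<^sup>L Q f) < r"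
          using k by (simp add: dist_real_def \<mu>_def inverse_eq_divide)
      qed
    qed
  qed
qed

lemma Fn_diff:
  fixes \<rho> :: "(real^'m^'l) set \<Rightarrow> (real^'m^'l) set \<Rightarrow> real"
  assumes xs: "\<And>i. xs i \<in> Pspace" and e: "e \<ge> 0"
    and h: "\<And>A. A \<in> Pspace \<Longrightarrow> \<bar>\<rho> A Z - \<rho> A Z'\<bar> \<le> e"
  shows "\<bar>Fn \<rho> xs n Z - Fn \<rho> xs n Z'\<bar> \<le> e"
proof (cases "n = 0")
  case True then show ?thesis using e by (simp add: Fn_def)
next
  case False
  then have n: "real n > 0" by simp
  have eq: "Fn \<rho> xs n Z - Fn \<rho> xs n Z' = (\<Sum>i<n. \<rho> (xs i) Z - \<rho> (xs i) Z') / real n"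
    unfolding Fn_def sum_subtractf by (simp add: diff_divide_distrib)
  have le: "\<bar>\<Sum>i<n. \<rho> (xs i) Z - \<rho> (xs i) Z'\<bar> \<le> (\<Sum>i<n. e)"
    by (rule order_trans[OF sum_abs sum_mono]) (rule h[OF xs])
  have "\<bar>Fn \<rho> xs n Z - Fn \<rho> xs n Z'\<bar> = \<bar>\<Sum>i<n. \<rho> (xs i) Z - \<rho> (xs i) Z'\<bar> / real n"
    unfolding eq using n by simp
  also have "\<dots> \<le> (\<Sum>i<n. e) / real n" by (rule divide_right_mono[OF le]) (use n in simp)
  also have "\<dots> = e" using n by simp
  finally show ?thesis .
qed

lemma ucont_FQ:
  fixes \<rho> :: "(real^'m^'l) set \<Rightarrow> (real^'m^'l) set \<Rightarrow> real"
  assumes rc: "rho_continuous \<rho>"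
    and Q: "prob_space Q" "sets Q = sets Pborel" "space Q = Pspace"
  shows "ucont (FQ \<rho> Q)"
  unfolding ucont_def
proof (intro allI impI)
  fix e :: real assume e: "e > 0"
  obtain d where d: "d > 0" and hd: "\<And>A Y Y'. A \<in> Pspace \<Longrightarrow> Y \<in> Xspace \<Longrightarrow> Y' \<in> Xspace \<Longrightarrow>
      norm (Y - Y') < d \<Longrightarrow> \<bar>\<rho> A (orbit Y) - \<rho> A (orbit Y')\<bar> < e"
    using rho_unif[OF rc e] by blast
  show "\<exists>d>0. \<forall>Y\<in>Xspace. \<forall>Y'\<in>Xspace. norm (Y - Y') < d \<longrightarrow> \<bar>FQ \<rho> Q (orbit Y) - FQ \<rho> Q (orbit Y')\<bar> \<le> e"
  proof (intro exI[of _ d] conjI d ballI impI)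
    fix Y Y' :: "real^'m^'l" assume Y: "Y \<in> Xspace" "Y' \<in> Xspace" "norm (Y - Y') < d"
    show "\<bar>FQ \<rho> Q (orbit Y) - FQ \<rho> Q (orbit Y')\<bar> \<le> e"
      by (rule FQ_diff[OF rc orbit_Pspace[OF Y(1)] orbit_Pspace[OF Y(2)] Q]) (erule less_imp_le[OF hd[OF _ Y]])
  qed
qed

lemma ucont_Fn:
  fixes \<rho> :: "(real^'m^'l) set \<Rightarrow> (real^'m^'l) set \<Rightarrow> real"
  assumes rc: "rho_continuous \<rho>" and xs: "\<And>i. xs i \<in> Pspace"
  shows "ucont (Fn \<rho> xs n)"
  unfolding ucont_def
proof (intro allI impI)
  fix e :: real assume e: "e > 0"
  obtain d where d: "d > 0" and hd: "\<And>A Y Y'. A \<in> Pspace \<Longrightarrow> Y \<in> Xspace \<Longrightarrow> Y' \<in> Xspace \<Longrightarrow>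
      norm (Y - Y') < d \<Longrightarrow> \<bar>\<rho> A (orbit Y) - \<rho> A (orbit Y')\<bar> < e"
    using rho_unif[OF rc e] by blast
  show "\<exists>d>0. \<forall>Y\<in>Xspace. \<forall>Y'\<in>Xspace. norm (Y - Y') < d \<longrightarrow> \<bar>Fn \<rho> xs n (orbit Y) - Fn \<rho> xs n (orbit Y')\<bar> \<le> e"
  proof (intro exI[of _ d] conjI d ballI impI)
    fix Y Y' :: "real^'m^'l" assume Y: "Y \<in> Xspace" "Y' \<in> Xspace" "norm (Y - Y') < d"
    show "\<bar>Fn \<rho> xs n (orbit Y) - Fn \<rho> xs n (orbit Y')\<bar> \<le> e"
      by (rule Fn_diff[OF xs less_imp_le[OF e]]) (erule less_imp_le[OF hd[OF _ Y]])
  qed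
qed

lemma tendsto_le_I:
  fixes f :: "nat \<Rightarrow> real"
  assumes "\<And>r. r > 0 \<Longrightarrow> eventually (\<lambda>n. \<bar>f n - L\<bar> \<le> r) sequentially"
  shows "f \<longlonglongrightarrow> L"
  unfolding tendsto_iff
proof (intro allI impI)
  fix r :: real assume r: "r > 0"
  show "eventually (\<lambda>n. dist (f n) L < r) sequentially"
    using assms[of "r/2"] r by (auto elim!: eventually_mono simp: dist_real_def)
qed

lemma ucont_min_ex:
  fixes H :: "(real^'m^'l) set \<Rightarrow> real"
  assumes "ucont H"
  shows "\<exists>Z0. Z0 \<in> Pspace \<and> (INF Z\<in>Pspace. H Z) = H Z0 \<and> (\<forall>Z\<in>Pspace. H Z0 \<le> H Z)"
proof -
  obtain Z0 where "Z0 \<in> Pspace" "(INF Z\<in>Pspace. H Z) = H Z0" "\<And>Z. Z \<in> Pspace \<Longrightarrow> H Z0 \<le> H Z"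
    by (rule ucont_min[OF assms]) blast
  then show ?thesis by blast
qed

lemma determ:
  fixes \<rho> :: "(real^'m^'l) set \<Rightarrow> (real^'m^'l) set \<Rightarrow> real"
  assumes rc: "rho_continuous \<rho>"
    and Q: "prob_space Q" "sets Q = sets Pborel" "space Q = Pspace"
    and xs: "\<And>i. xs i \<in> Pspace"
    and U: "\<And>r. r > 0 \<Longrightarrow> eventually (\<lambda>n. \<forall>Z\<in>Pspace. \<bar>Fn \<rho> xs n Z - FQ \<rho> Q Z\<bar> \<le> r) sequentially"
  shows "(\<lambda>n. Dhaus (Fn_set \<rho> xs n) (FQ_set \<rho> Q)) \<longlonglongrightarrow> 0" and "(\<lambda>n. Vn \<rho> xs n) \<longlonglongrightarrow> VQ \<rho> Q"
proof -
  have uQ: "ucont (FQ \<rho> Q)" by (rule ucont_FQ[OF rc Q])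
  obtain ZQ where ZQ0: "ZQ \<in> Pspace" "(INF Z\<in>Pspace. FQ \<rho> Q Z) = FQ \<rho> Q ZQ" "\<And>Z. Z \<in> Pspace \<Longrightarrow> FQ \<rho> Q ZQ \<le> FQ \<rho> Q Z"
    using ucont_min_ex[OF uQ] by blast
  have ZQ: "ZQ \<in> Pspace" "VQ \<rho> Q = FQ \<rho> Q ZQ" "\<And>Z. Z \<in> Pspace \<Longrightarrow> FQ \<rho> Q ZQ \<le> FQ \<rho> Q Z"
    using ZQ0 unfolding VQ_def by auto
  have Vclose: "\<bar>Vn \<rho> xs n - VQ \<rho> Q\<bar> \<le> r" if h: "\<forall>Z\<in>Pspace. \<bar>Fn \<rho> xs n Z - FQ \<rho> Q Z\<bar> \<le> r" for n r
  proof -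
    obtain Zn where Zn0: "Zn \<in> Pspace" "(INF Z\<in>Pspace. Fn \<rho> xs n Z) = Fn \<rho> xs n Zn" "\<And>Z. Z \<in> Pspace \<Longrightarrow> Fn \<rho> xs n Zn \<le> Fn \<rho> xs n Z"
      using ucont_min_ex[OF ucont_Fn[where xs=xs and n=n, OF rc xs]] by blast
    have Zn: "Zn \<in> Pspace" "Vn \<rho> xs n = Fn \<rho> xs n Zn" "\<And>Z. Z \<in> Pspace \<Longrightarrow> Fn \<rho> xs n Zn \<le> Fn \<rho> xs n Z"
      using Zn0 unfolding Vn_def by auto
    have "Fn \<rho> xs n Zn \<le> Fn \<rho> xs n ZQ" using Zn ZQ by auto
    moreover have "FQ \<rho> Q ZQ \<le> FQ \<rho> Q Zn" using Zn ZQ by auto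
    moreover have "\<bar>Fn \<rho> xs n ZQ - FQ \<rho> Q ZQ\<bar> \<le> r" "\<bar>Fn \<rho> xs n Zn - FQ \<rho> Q Zn\<bar> \<le> r"
      using h Zn ZQ by auto
    ultimately show ?thesis using Zn ZQ by linarith
  qed
  show "(\<lambda>n. Vn \<rho> xs n) \<longlonglongrightarrow> VQ \<rho> Q"
  proof (rule tendsto_le_I)
    fix r :: real assume r: "r > 0"
    show "eventually (\<lambda>n. \<bar>Vn \<rho> xs n - VQ \<rho> Q\<bar> \<le> r) sequentially"
      by (rule eventually_mono[OF U[OF r]]) (erule Vclose)
  qed
  have ZQ_set: "ZQ \<in> FQ_set \<rho> Q" using ZQ unfolding FQ_set_def by auto
  have bddQ: "bdd_below (FQ \<rho> Q ` Pspace)" by (rule bdd_belowI2[of _ "FQ \<rho> Q ZQ"]) (rule ZQ(3))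
  show "(\<lambda>n. Dhaus (Fn_set \<rho> xs n) (FQ_set \<rho> Q)) \<longlonglongrightarrow> 0"
  proof (rule tendsto_le_I)
    fix r :: real assume r: "r > 0"
    define C where "C = {Y\<in>Xspace. FQ \<rho> Q (orbit Y) \<le> VQ \<rho> Q}"
    define K where "K = (\<Inter>Y'\<in>C. {Y. r \<le> norm (Y - Y')}) \<inter> Xspace"
    have "closed (\<Inter>Y'\<in>C. {Y::real^'m^'l. r \<le> norm (Y - Y')})"
      by (intro closed_INT ballI closed_Collect_le continuous_intros)
    then have cK: "compact K" unfolding K_def by (intro closed_Int_compact Xspace_compact)
    obtain \<gamma> where g: "\<gamma> > 0" "\<And>Y. Y \<in> K \<Longrightarrow> VQ \<rho> Q + \<gamma> \<le> FQ \<rho> Q (orbit Y)"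
    proof (cases "K = {}")
      case True then show ?thesis using that[of 1] by auto
    next
      case False
      have "continuous_on K (\<lambda>Y. FQ \<rho> Q (orbit Y))"
        by (rule continuous_on_subset[OF ucont_cont[OF uQ]]) (auto simp: K_def)
      then obtain Y1 where Y1: "Y1 \<in> K" "\<And>Y. Y \<in> K \<Longrightarrow> FQ \<rho> Q (orbit Y1) \<le> FQ \<rho> Q (orbit Y)"
        using continuous_attains_inf[OF cK False] by blast
      have Y1X: "Y1 \<in> Xspace" using Y1(1) unfolding K_def by blast
      have "Y1 \<notin> C"
      proof
        assume "Y1 \<in> C"
        with Y1(1) have "r \<le> norm (Y1 - Y1)" unfolding K_def by blast
        then show False using r by simp
      qed
      then have gt: "FQ \<rho> Q (orbit Y1) > VQ \<rho> Q" using Y1X unfolding C_def by auto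
      show ?thesis
      proof (rule that)
        show "FQ \<rho> Q (orbit Y1) - VQ \<rho> Q > 0" using gt by simp
        fix Y assume "Y \<in> K"
        then show "VQ \<rho> Q + (FQ \<rho> Q (orbit Y1) - VQ \<rho> Q) \<le> FQ \<rho> Q (orbit Y)" using Y1(2) by simp
      qed
    qed
    have "eventually (\<lambda>n. \<forall>Z\<in>Pspace. \<bar>Fn \<rho> xs n Z - FQ \<rho> Q Z\<bar> \<le> \<gamma>/3) sequentially"
      by (rule U) (use g(1) in simp)
    then show "eventually (\<lambda>n. \<bar>Dhaus (Fn_set \<rho> xs n) (FQ_set \<rho> Q) - 0\<bar> \<le> r) sequentially"
    proof (rule eventually_mono)
      fix n assume h: "\<forall>Z\<in>Pspace. \<bar>Fn \<rho> xs n Z - FQ \<rho> Q Z\<bar> \<le> \<gamma>/3"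
      have vc: "\<bar>Vn \<rho> xs n - VQ \<rho> Q\<bar> \<le> \<gamma>/3" using Vclose h by blast
      have each: "(INF W\<in>FQ_set \<rho> Q. delta2 Z W) \<le> r" if Z: "Z \<in> Fn_set \<rho> xs n" for Z
      proof -
        have ZP: "Z \<in> Pspace" and ZV: "Fn \<rho> xs n Z = Vn \<rho> xs n" using Z unfolding Fn_set_def by auto
        obtain Y where Y: "Y \<in> Xspace" "Z = orbit Y" using ZP by (elim Pspace_E) blast
        have hz: "\<bar>Fn \<rho> xs n Z - FQ \<rho> Q Z\<bar> \<le> \<gamma>/3" using h ZP by blast
        have "FQ \<rho> Q Z < VQ \<rho> Q + \<gamma>" using hz ZV vc g(1) by linarith
        then have lt: "FQ \<rho> Q (orbit Y) < VQ \<rho> Q + \<gamma>" using Y(2) by simp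
        have "Y \<notin> K"
        proof
          assume "Y \<in> K"
          from g(2)[OF this] lt show False by linarith
        qed
        then have "\<exists>Y'\<in>C. norm (Y - Y') < r" using Y(1) unfolding K_def by (auto simp: not_le)
        then obtain Y' where Y': "Y' \<in> C" "norm (Y - Y') < r" by blast
        have Y'P: "orbit Y' \<in> Pspace" using Y' orbit_Pspace unfolding C_def by auto
        have "VQ \<rho> Q \<le> FQ \<rho> Q (orbit Y')" using ZQ Y'P by auto
        then have Y'F: "orbit Y' \<in> FQ_set \<rho> Q" using Y' Y'P unfolding C_def FQ_set_def by auto
        have nn0: "0 \<le> delta2 Z W" if "W \<in> FQ_set \<rho> Q" for W
          using that ZP by (intro delta2_nonneg Pspace_ne) (auto simp: FQ_set_def)
        have bd: "bdd_below (delta2 Z ` FQ_set \<rho> Q)"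
          by (rule bdd_belowI2[of _ 0]) (rule nn0)
        have "(INF W\<in>FQ_set \<rho> Q. delta2 Z W) \<le> delta2 Z (orbit Y')"
          by (rule cINF_lower[OF bd Y'F])
        also have "\<dots> \<le> norm (Y - Y')" using Y(2) delta2_orbit by simp
        finally show ?thesis using Y' by simp
      qed
      have nn: "0 \<le> (INF W\<in>FQ_set \<rho> Q. delta2 Z W)" if Z: "Z \<in> Fn_set \<rho> xs n" for Z
      proof (rule cINF_greatest)
        show "FQ_set \<rho> Q \<noteq> {}" using ZQ_set by blast
        fix W assume "W \<in> FQ_set \<rho> Q"
        then show "0 \<le> delta2 Z W" using Z by (intro delta2_nonneg Pspace_ne) (auto simp: FQ_set_def Fn_set_def)
      qed
      obtain Zn where Zn0: "Zn \<in> Pspace" "(INF Z\<in>Pspace. Fn \<rho> xs n Z) = Fn \<rho> xs n Zn"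
        using ucont_min_ex[OF ucont_Fn[where xs=xs and n=n, OF rc xs]] by blast
      have Zn: "Zn \<in> Pspace" "Vn \<rho> xs n = Fn \<rho> xs n Zn" using Zn0 unfolding Vn_def by auto
      have ZnF: "Zn \<in> Fn_set \<rho> xs n" using Zn unfolding Fn_set_def by auto
      have up: "Dhaus (Fn_set \<rho> xs n) (FQ_set \<rho> Q) \<le> r"
        unfolding Dhaus_def by (rule cSUP_least) (use ZnF each in auto)
      have "(INF W\<in>FQ_set \<rho> Q. delta2 Zn W) \<le> Dhaus (Fn_set \<rho> xs n) (FQ_set \<rho> Q)"
        unfolding Dhaus_def by (rule cSUP_upper[OF ZnF]) (rule bdd_aboveI2[of _ _ r], rule each)
      then have "0 \<le> Dhaus (Fn_set \<rho> xs n) (FQ_set \<rho> Q)" using nn[OF ZnF] by linarith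
      then show "\<bar>Dhaus (Fn_set \<rho> xs n) (FQ_set \<rho> Q) - 0\<bar> \<le> r" using up by simp
    qed
  qed
qed

lemma unif:
  fixes \<rho> :: "(real^'m^'l) set \<Rightarrow> (real^'m^'l) set \<Rightarrow> real"
    and d :: "nat \<Rightarrow> real" and NN :: "nat \<Rightarrow> (real^'m^'l) set"
  assumes rc: "rho_continuous \<rho>"
    and Q: "prob_space Q" "sets Q = sets Pborel" "space Q = Pspace"
    and xs: "\<And>i. xs i \<in> Pspace"
    and dh: "\<And>k A Y Y'. A \<in> Pspace \<Longrightarrow> Y \<in> Xspace \<Longrightarrow> Y' \<in> Xspace \<Longrightarrow> norm (Y - Y') < d k \<Longrightarrow>
               \<bar>\<rho> A (orbit Y) - \<rho> A (orbit Y')\<bar> < 1 / real (Suc k)"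
    and fin: "\<And>k. finite (NN k)" and sub: "\<And>k. NN k \<subseteq> Xspace"
    and cov: "\<And>k Y. Y \<in> Xspace \<Longrightarrow> \<exists>Y'\<in>NN k. norm (Y - Y') < d k"
    and conv: "\<And>k Y. Y \<in> NN k \<Longrightarrow> (\<lambda>n. Fn \<rho> xs n (orbit Y)) \<longlonglongrightarrow> FQ \<rho> Q (orbit Y)"
    and r: "r > 0"
  shows "eventually (\<lambda>n. \<forall>Z\<in>Pspace. \<bar>Fn \<rho> xs n Z - FQ \<rho> Q Z\<bar> \<le> r) sequentially"
proof -
  have r3: "r / 3 > 0" using r by simp
  obtain k where k: "inverse (real (Suc k)) < r / 3" using reals_Archimedean[OF r3] by blast
  have "\<forall>Y\<in>NN k. eventually (\<lambda>n. \<bar>Fn \<rho> xs n (orbit Y) - FQ \<rho> Q (orbit Y)\<bar> < r / 3) sequentially"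
  proof
    fix Y assume "Y \<in> NN k"
    from conv[OF this] show "eventually (\<lambda>n. \<bar>Fn \<rho> xs n (orbit Y) - FQ \<rho> Q (orbit Y)\<bar> < r / 3) sequentially"
      unfolding tendsto_iff dist_real_def using r3 by blast
  qed
  then have ev: "eventually (\<lambda>n. \<forall>Y\<in>NN k. \<bar>Fn \<rho> xs n (orbit Y) - FQ \<rho> Q (orbit Y)\<bar> < r / 3) sequentially"
    by (rule eventually_ball_finite[OF fin])
  show ?thesis
  proof (rule eventually_mono[OF ev], intro ballI)
    fix n and Z :: "(real^'m^'l) set"
    assume H: "\<forall>Y\<in>NN k. \<bar>Fn \<rho> xs n (orbit Y) - FQ \<rho> Q (orbit Y)\<bar> < r / 3" and Z: "Z \<in> Pspace"
    obtain Y0 :: "real^'m^'l" where Y0: "Y0 \<in> Xspace" "Z = orbit Y0" using Z by (elim Pspace_E) blast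
    obtain Y where Y: "Y \<in> NN k" "norm (Y0 - Y) < d k" using cov[OF Y0(1)] by blast
    have YX: "Y \<in> Xspace" using Y(1) sub by blast
    have hA: "\<bar>\<rho> A (orbit Y0) - \<rho> A (orbit Y)\<bar> \<le> 1 / real (Suc k)" if "A \<in> Pspace" for A
      using dh[OF that Y0(1) YX Y(2)] by simp
    have e0: "0 \<le> 1 / real (Suc k)" by simp
    have 1: "\<bar>Fn \<rho> xs n (orbit Y0) - Fn \<rho> xs n (orbit Y)\<bar> \<le> 1 / real (Suc k)"
      by (rule Fn_diff[OF xs e0 hA])
    have 2: "\<bar>FQ \<rho> Q (orbit Y0) - FQ \<rho> Q (orbit Y)\<bar> \<le> 1 / real (Suc k)"
      by (rule FQ_diff[OF rc orbit_Pspace[OF Y0(1)] orbit_Pspace[OF YX] Q hA])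
    have 3: "\<bar>Fn \<rho> xs n (orbit Y) - FQ \<rho> Q (orbit Y)\<bar> < r / 3" using H Y(1) by blast
    have k': "1 / real (Suc k) < r / 3" using k by (simp add: inverse_eq_divide)
    show "\<bar>Fn \<rho> xs n Z - FQ \<rho> Q Z\<bar> \<le> r" unfolding Y0(2) using 1 2 3 k' by linarith
  qed
qed

theorem theorem3:
  fixes M :: "'w measure"
    and Q :: "(real^'m^'l) set measure"
    and Xs :: "nat \<Rightarrow> 'w \<Rightarrow> (real^'m^'l) set"
    and \<rho> :: "(real^'m^'l) set \<Rightarrow> (real^'m^'l) set \<Rightarrow> real"
  assumes "CARD('l) \<le> CARD('m)"
    and "prob_space M"
    and "prob_space Q"
    and "sets Q = sets Pborel"
    and "\<And>i. Xs i \<in> measurable M Pborel"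
    and "\<And>i. distr M Pborel (Xs i) = Q"
    and "prob_space.indep_vars M (\<lambda>_. Pborel) Xs UNIV"
    and "rho_continuous \<rho>"
  shows "(AE w in M. (\<lambda>n. Dhaus (Fn_set \<rho> (\<lambda>i. Xs i w) n) (FQ_set \<rho> Q)) \<longlonglongrightarrow> 0) \<and>
         (AE w in M. (\<lambda>n. Vn \<rho> (\<lambda>i. Xs i w) n) \<longlonglongrightarrow> VQ \<rho> Q)"
proof -
  note M = assms(2) and Xm = assms(5) and Xd = assms(6) and ind = assms(7) and rc = assms(8)
  interpret prob_space M by (rule M)
  have Qsp: "space Q = Pspace"
    using arg_cong[OF Xd[of 0], of space] by (simp add: space_Pborel)
  note Qf = assms(3) assms(4) Qsp
  obtain B where B: "\<And>A Z. A \<in> Pspace \<Longrightarrow> Z \<in> Pspace \<Longrightarrow> \<bar>\<rho> A Z\<bar> \<le> B"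
    using rho_bound[OF rc] by blast
  define P where "P k d NN \<longleftrightarrow> d > 0 \<and>
      (\<forall>A\<in>Pspace. \<forall>Y\<in>Xspace. \<forall>Y'\<in>Xspace. norm (Y - Y') < d \<longrightarrow> \<bar>\<rho> A (orbit Y) - \<rho> A (orbit Y')\<bar> < 1 / real (Suc k)) \<and>
      finite NN \<and> NN \<subseteq> Xspace \<and> (\<forall>Y\<in>Xspace. \<exists>Y'\<in>NN. norm (Y - Y') < d)"
    for k :: nat and d :: real and NN :: "(real^'m^'l) set"
  have ex: "\<exists>dN. P k (fst dN) (snd dN)" for k
  proof -
    have e: "1 / real (Suc k) > 0" by simp
    obtain d where d: "d > 0" and hd: "\<And>A Y Y'. A \<in> Pspace \<Longrightarrow> Y \<in> Xspace \<Longrightarrow> Y' \<in> Xspace \<Longrightarrow>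
        norm (Y - Y') < d \<Longrightarrow> \<bar>\<rho> A (orbit Y) - \<rho> A (orbit Y')\<bar> < 1 / real (Suc k)"
      using rho_unif[OF rc e] by blast
    have cv: "(Xspace :: (real^'m^'l) set) \<subseteq> \<Union> ((\<lambda>Y. ball Y d) ` Xspace)" using d by auto
    have "\<exists>C::(real^'m^'l) set. C \<subseteq> Xspace \<and> finite C \<and> Xspace \<subseteq> \<Union> ((\<lambda>Y. ball Y d) ` C)"
      apply (rule compactE_image[OF Xspace_compact _ cv])
       apply simp
      subgoal for C' by auto
      done
    then obtain C :: "(real^'m^'l) set" where C: "C \<subseteq> Xspace" "finite C" "Xspace \<subseteq> \<Union> ((\<lambda>Y. ball Y d) ` C)"
      by blast
    have cov: "\<forall>Y\<in>Xspace. \<exists>Y'\<in>C. norm (Y - Y') < d"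
    proof
      fix Y :: "real^'m^'l" assume "Y \<in> Xspace"
      then have "Y \<in> \<Union> ((\<lambda>Y. ball Y d) ` C)" by (rule subsetD[OF C(3)])
      then obtain Y' where "Y' \<in> C" "Y \<in> ball Y' d" by (rule UN_E)
      then show "\<exists>Y'\<in>C. norm (Y - Y') < d" by (auto simp: dist_norm norm_minus_commute)
    qed
    have hd': "\<forall>A\<in>Pspace. \<forall>Y\<in>Xspace. \<forall>Y'\<in>Xspace. norm (Y - Y') < d \<longrightarrow> \<bar>\<rho> A (orbit Y) - \<rho> A (orbit Y')\<bar> < 1 / real (Suc k)"
      using hd by blast
    have "P k d C" unfolding P_def using d hd' C(1) C(2) cov by (intro conjI)
    then show ?thesis by (intro exI[of _ "(d, C)"]) simp
  qed
  from ex have "\<forall>k. \<exists>dN. P k (fst dN) (snd dN)" by blast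
  then have "\<exists>f. \<forall>k. P k (fst (f k)) (snd (f k))" by (rule choice)
  then obtain dN where dN: "\<forall>k. P k (fst (dN k)) (snd (dN k))" by blast
  define d where "d k = fst (dN k)" for k
  define NN where "NN k = snd (dN k)" for k
  have Pk: "P k (d k) (NN k)" for k using dN unfolding d_def NN_def by simp
  define T where "T = (\<Union>k. NN k)"
  have cT: "countable T" unfolding T_def using Pk unfolding P_def
    by (intro countable_UN) (auto intro: countable_finite)
  have TX: "T \<subseteq> Xspace" unfolding T_def using Pk unfolding P_def by blast
  have pw: "AE w in M. (\<lambda>n. Fn \<rho> (\<lambda>i. Xs i w) n (orbit Y)) \<longlonglongrightarrow> FQ \<rho> Q (orbit Y)" if Y: "Y \<in> T" for Y
  proof -
    have OY: "orbit Y \<in> Pspace" using Y TX orbit_Pspace by blast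
    have "AE w in M. (\<lambda>n. (\<Sum>i<n. \<rho> (Xs i w) (orbit Y)) / real n) \<longlonglongrightarrow> integral\<^sup>L Q (\<lambda>A. \<rho> A (orbit Y))"
      by (rule slln_bounded[OF M Xm Xd ind rho_meas[OF rc OY], where B=B])
         (use B OY in \<open>auto simp: space_Pborel\<close>)
    then show ?thesis by (simp add: Fn_def FQ_def)
  qed
  have "AE w in M. \<forall>Y\<in>T. (\<lambda>n. Fn \<rho> (\<lambda>i. Xs i w) n (orbit Y)) \<longlonglongrightarrow> FQ \<rho> Q (orbit Y)"
    using pw cT by (simp add: AE_ball_countable)
  then have good: "AE w in M. w \<in> space M \<and> (\<forall>Y\<in>T. (\<lambda>n. Fn \<rho> (\<lambda>i. Xs i w) n (orbit Y)) \<longlonglongrightarrow> FQ \<rho> Q (orbit Y))"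
    using AE_space by eventually_elim auto
  have both: "(\<lambda>n. Dhaus (Fn_set \<rho> (\<lambda>i. Xs i w) n) (FQ_set \<rho> Q)) \<longlonglongrightarrow> 0 \<and>
              (\<lambda>n. Vn \<rho> (\<lambda>i. Xs i w) n) \<longlonglongrightarrow> VQ \<rho> Q"
    if w: "w \<in> space M" and cw: "\<forall>Y\<in>T. (\<lambda>n. Fn \<rho> (\<lambda>i. Xs i w) n (orbit Y)) \<longlonglongrightarrow> FQ \<rho> Q (orbit Y)" for w
  proof -
    have xs: "Xs i w \<in> Pspace" for i
      using measurable_space[OF Xm w] by (simp add: space_Pborel)
    have U: "eventually (\<lambda>n. \<forall>Z\<in>Pspace. \<bar>Fn \<rho> (\<lambda>i. Xs i w) n Z - FQ \<rho> Q Z\<bar> \<le> r) sequentially"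
      if r: "r > 0" for r
    proof (rule unif[OF rc Qf, where d=d and NN=NN])
      show "\<And>i. Xs i w \<in> Pspace" by (rule xs)
      show "\<And>k A Y Y'. A \<in> Pspace \<Longrightarrow> Y \<in> Xspace \<Longrightarrow> Y' \<in> Xspace \<Longrightarrow> norm (Y - Y') < d k \<Longrightarrow>
               \<bar>\<rho> A (orbit Y) - \<rho> A (orbit Y')\<bar> < 1 / real (Suc k)"
        using Pk unfolding P_def by blast
      show "\<And>k. finite (NN k)" using Pk unfolding P_def by blast
      show "\<And>k. NN k \<subseteq> Xspace" using Pk unfolding P_def by blast
      show "\<And>k Y. Y \<in> Xspace \<Longrightarrow> \<exists>Y'\<in>NN k. norm (Y - Y') < d k" using Pk unfolding P_def by blast
      show "\<And>k Y. Y \<in> NN k \<Longrightarrow> (\<lambda>n. Fn \<rho> (\<lambda>i. Xs i w) n (orbit Y)) \<longlonglongrightarrow> FQ \<rho> Q (orbit Y)"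
        using cw unfolding T_def by blast
      show "r > 0" by (rule r)
    qed
    show ?thesis
      using determ[OF rc Qf, where xs="\<lambda>i. Xs i w", OF xs U] by blast
  qed
  show ?thesis
  proof
    show "AE w in M. (\<lambda>n. Dhaus (Fn_set \<rho> (\<lambda>i. Xs i w) n) (FQ_set \<rho> Q)) \<longlonglongrightarrow> 0"
      using good by eventually_elim (use both in blast)
    show "AE w in M. (\<lambda>n. Vn \<rho> (\<lambda>i. Xs i w) n) \<longlonglongrightarrow> VQ \<rho> Q"
      using good by eventually_elim (use both in blast)
  qed
qed

end
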